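(* Let $0\le p,q<1$, $\theta\in(0,1)$ irrational, $N$ a positive integer. Let $\mathcal O(S^3_{pq\theta})$ be the universal complex unital $*$-algebra generated by $a,b$ subject to $ab=e^{2\pi i\theta}ba$, $ab^*=e^{-2\pi i\theta}b^*a$, $a^*a-paa^*=1-p$, $b^*b-qbb^*=1-q$, $(1-aa^* )(1-bb^* )=0$, with right $\mathcal O(U(1))$-coaction $x\mapsto x_{(0)}\otimes x_{(1)}$ determined by $a\mapsto a\otimes u$, $b\mapsto b\otimes u$ (a $*$-algebra map), and corresponding $U(1)$-action $\alpha_\lambda(a)=\lambda a$, $\alpha_\lambda(b)=\lambda b$. Let $\mathbb Z/N\mathbb Z$ act on $\mathcal O(S^3_{pq\theta})\otimes\mathcal O(U(1))$ by $\tilde\alpha_{\zeta}(x\otimes h)=\alpha_\zeta(x)\otimes h(\,\cdot\,\zeta^{-1})$ for $\zeta=e^{2\pi ik/N}$. Let $\psi:\mathcal O(U(1))\to\mathcal O(U(1))$ be the injective $*$-Hopf algebra map $u\mapsto u^N$. Then the maps $$\phi(x\otimes h)=x_{(0)}\otimes x_{(1)}\psi(h),\qquad \phi^{-1}\Big(\sum_i x^i\otimes h^i\Big)=\sum_i x^i_{(0)}\otimes\psi^{-1}\big(S(x^i_{(1)})h^i\big)$$ are well-defined mutually inverse $*$-algebra isomorphisms between $\mathcal O(S^3_{pq\theta})\otimes\mathcal O(U(1))$ and the fixed-point algebra $(\mathcal O(S^3_{pq\theta})\otimes\mathcal O(U(1)))^{\mathbb Z/N\mathbb Z}$.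
   Context: $\mathcal O(U(1))=\mathbb C[u,u^{-1}]$ is the Hopf $*$-algebra generated by a group-like unitary $u$, with antipode $S(u)=u^{-1}$; its elements are regarded as functions on $U(1)$. The image of $\psi$ is $\{h\in\mathcal O(U(1))\mid \pi(h_{(1)})\otimes h_{(2)}=1\otimes h\}$ where $\pi(u)=\tilde u$ is the surjection onto $\mathcal O(\mathbb Z/N\mathbb Z)$, $\tilde u^N=1$. Tensor products are algebraic over $\mathbb C$. *)

theory Defs
  imports Complex_Main "HOL-Library.Poly_Mapping" "HOL-Library.Product_Plus"
begin

datatype gen = Ga | Gas | Gb | Gbs

datatype word = W "gen list"

instantiation word :: monoid_add
begin
definition zero_word :: word where "zero_word = W []"
fun plus_word :: "word \<Rightarrow> word \<Rightarrow> word" where "plus_word (W xs) (W ys) = W (xs @ ys)"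
instance proof
  fix a b c :: word
  show "a + b + c = a + (b + c)" by (cases a; cases b; cases c) simp
  show "0 + a = a" by (cases a) (simp add: zero_word_def)
  show "a + 0 = a" by (cases a) (simp add: zero_word_def)
qed
end

text \<open>Free algebra = monoid algebra of the free monoid on a, a*, b, b*;
  O(U(1)) = Laurent polynomials C[u,u^-1] = group algebra of int (u^m = single m 1);
  algebraic tensor product F (x) O(U(1)) = monoid algebra of word x int.\<close>
type_synonym freealg = "word \<Rightarrow>\<^sub>0 complex"
type_synonym OU1 = "int \<Rightarrow>\<^sub>0 complex"
type_synonym tensalg = "(word \<times> int) \<Rightarrow>\<^sub>0 complex"

definition sc :: "complex \<Rightarrow> ('k \<Rightarrow>\<^sub>0 complex) \<Rightarrow> ('k \<Rightarrow>\<^sub>0 complex)" where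
  "sc c x = Poly_Mapping.map (\<lambda>v. c * v) x"

definition lin :: "('k \<Rightarrow> ('l \<Rightarrow>\<^sub>0 complex)) \<Rightarrow> ('k \<Rightarrow>\<^sub>0 complex) \<Rightarrow> ('l \<Rightarrow>\<^sub>0 complex)" where
  "lin f y = (\<Sum>k\<in>Poly_Mapping.keys y. sc (Poly_Mapping.lookup y k) (f k))"

definition antilin :: "('k \<Rightarrow> ('l \<Rightarrow>\<^sub>0 complex)) \<Rightarrow> ('k \<Rightarrow>\<^sub>0 complex) \<Rightarrow> ('l \<Rightarrow>\<^sub>0 complex)" where
  "antilin f y = (\<Sum>k\<in>Poly_Mapping.keys y. sc (cnj (Poly_Mapping.lookup y k)) (f k))"

definition kmap :: "('k \<Rightarrow> 'l) \<Rightarrow> ('k \<Rightarrow>\<^sub>0 complex) \<Rightarrow> ('l \<Rightarrow>\<^sub>0 complex)" where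
  "kmap f = lin (\<lambda>k. Poly_Mapping.single (f k) 1)"

fun gen_star :: "gen \<Rightarrow> gen" where
  "gen_star Ga = Gas" | "gen_star Gas = Ga" | "gen_star Gb = Gbs" | "gen_star Gbs = Gb"

fun word_star :: "word \<Rightarrow> word" where
  "word_star (W xs) = W (rev (map gen_star xs))"

definition fstar :: "freealg \<Rightarrow> freealg" where
  "fstar = antilin (\<lambda>w. Poly_Mapping.single (word_star w) 1)"

definition ga :: freealg where "ga = Poly_Mapping.single (W [Ga]) 1"
definition gas :: freealg where "gas = Poly_Mapping.single (W [Gas]) 1"
definition gb :: freealg where "gb = Poly_Mapping.single (W [Gb]) 1"
definition gbs :: freealg where "gbs = Poly_Mapping.single (W [Gbs]) 1"

definition rels :: "real \<Rightarrow> real \<Rightarrow> real \<Rightarrow> freealg set" where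
  "rels p q \<theta> = (let e = cis (2 * pi * \<theta>) in
     { ga * gb - sc e (gb * ga),
       ga * gbs - sc (cnj e) (gbs * ga),
       gas * ga - sc (complex_of_real p) (ga * gas) - sc (1 - complex_of_real p) 1,
       gbs * gb - sc (complex_of_real q) (gb * gbs) - sc (1 - complex_of_real q) 1,
       (1 - ga * gas) * (1 - gb * gbs) })"

inductive_set rel_ideal :: "real \<Rightarrow> real \<Rightarrow> real \<Rightarrow> freealg set" for p q \<theta> where
  gen: "r \<in> rels p q \<theta> \<Longrightarrow> r \<in> rel_ideal p q \<theta>"
| zero: "0 \<in> rel_ideal p q \<theta>"
| add: "x \<in> rel_ideal p q \<theta> \<Longrightarrow> y \<in> rel_ideal p q \<theta> \<Longrightarrow> x + y \<in> rel_ideal p q \<theta>"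
| lmult: "x \<in> rel_ideal p q \<theta> \<Longrightarrow> z * x \<in> rel_ideal p q \<theta>"
| rmult: "x \<in> rel_ideal p q \<theta> \<Longrightarrow> x * z \<in> rel_ideal p q \<theta>"
| star: "x \<in> rel_ideal p q \<theta> \<Longrightarrow> fstar x \<in> rel_ideal p q \<theta>"

definition tens :: "freealg \<Rightarrow> OU1 \<Rightarrow> tensalg" where
  "tens x h = kmap (\<lambda>w. (w, 0)) x * kmap (\<lambda>m. (0, m)) h"

definition tstar :: "tensalg \<Rightarrow> tensalg" where
  "tstar = antilin (\<lambda>(w, m). Poly_Mapping.single (word_star w, - m) 1)"

definition antipode :: "OU1 \<Rightarrow> OU1" where "antipode = kmap uminus"

definition psi :: "nat \<Rightarrow> OU1 \<Rightarrow> OU1" where "psi N = kmap (\<lambda>m. int N * m)"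

definition evU :: "OU1 \<Rightarrow> complex \<Rightarrow> complex" where
  "evU h z = (\<Sum>m\<in>Poly_Mapping.keys h. Poly_Mapping.lookup h m * z powi m)"

text \<open>h |-> h( . * \<zeta>^-1)\<close>
definition rotU :: "complex \<Rightarrow> OU1 \<Rightarrow> OU1" where
  "rotU \<zeta> = lin (\<lambda>m. Poly_Mapping.single m ((inverse \<zeta>) powi m))"

fun gen_deg :: "gen \<Rightarrow> int" where
  "gen_deg Ga = 1" | "gen_deg Gas = -1" | "gen_deg Gb = 1" | "gen_deg Gbs = -1"

fun deg :: "word \<Rightarrow> int" where "deg (W xs) = sum_list (map gen_deg xs)"

text \<open>coaction x |-> x_(0) (x) x_(1): the unique *-algebra map with a |-> a(x)u, b |-> b(x)u\<close>
definition rho :: "freealg \<Rightarrow> tensalg" where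
  "rho = lin (\<lambda>w. tens (Poly_Mapping.single w 1) (Poly_Mapping.single (deg w) 1))"

definition idT :: "(OU1 \<Rightarrow> OU1) \<Rightarrow> tensalg \<Rightarrow> tensalg" where
  "idT f = lin (\<lambda>(v, n). tens (Poly_Mapping.single v 1) (f (Poly_Mapping.single n 1)))"

text \<open>U(1)-action alpha_\<lambda>(x) = x_(0) ev_\<lambda>(x_(1))\<close>
definition alphaF :: "complex \<Rightarrow> freealg \<Rightarrow> freealg" where
  "alphaF l x = lin (\<lambda>(v, n). sc (evU (Poly_Mapping.single n 1) l) (Poly_Mapping.single v 1)) (rho x)"

definition alphaT :: "complex \<Rightarrow> tensalg \<Rightarrow> tensalg" where
  "alphaT \<zeta> = lin (\<lambda>(w, m). tens (alphaF \<zeta> (Poly_Mapping.single w 1)) (rotU \<zeta> (Poly_Mapping.single m 1)))"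

text \<open>x (x) h |-> x_(0) (x) x_(1) psi(h)\<close>
definition phiT :: "nat \<Rightarrow> tensalg \<Rightarrow> tensalg" where
  "phiT N = lin (\<lambda>(w, m). idT (\<lambda>g. g * psi N (Poly_Mapping.single m 1)) (rho (Poly_Mapping.single w 1)))"

text \<open>x (x) h |-> x_(0) (x) S(x_(1)) h  (before applying id (x) psi^-1)\<close>
definition preT :: "tensalg \<Rightarrow> tensalg" where
  "preT = lin (\<lambda>(w, m). idT (\<lambda>g. antipode g * Poly_Mapping.single m 1) (rho (Poly_Mapping.single w 1)))"

definition psiT :: "nat \<Rightarrow> tensalg \<Rightarrow> tensalg" where "psiT N = idT (psi N)"

text \<open>I (x) O(U(1)) inside F (x) O(U(1))\<close>
definition slice :: "int \<Rightarrow> tensalg \<Rightarrow> freealg" where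
  "slice m = lin (\<lambda>(w, n). if n = m then Poly_Mapping.single w 1 else 0)"

definition tideal :: "real \<Rightarrow> real \<Rightarrow> real \<Rightarrow> tensalg set" where
  "tideal p q \<theta> = {y. \<forall>m. slice m y \<in> rel_ideal p q \<theta>}"

definition cls :: "('k \<Rightarrow>\<^sub>0 complex) set \<Rightarrow> ('k \<Rightarrow>\<^sub>0 complex) \<Rightarrow> ('k \<Rightarrow>\<^sub>0 complex) set" where
  "cls J y = {z. z - y \<in> J}"

definition quot :: "('k \<Rightarrow>\<^sub>0 complex) set \<Rightarrow> ('k \<Rightarrow>\<^sub>0 complex) set set" where
  "quot J = range (cls J)"

definition rep :: "'a set \<Rightarrow> 'a" where "rep C = (SOME y. y \<in> C)"

definition qmap :: "('k \<Rightarrow>\<^sub>0 complex) set \<Rightarrow> (('k \<Rightarrow>\<^sub>0 complex) \<Rightarrow> ('k \<Rightarrow>\<^sub>0 complex))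
    \<Rightarrow> ('k \<Rightarrow>\<^sub>0 complex) set \<Rightarrow> ('k \<Rightarrow>\<^sub>0 complex) set" where
  "qmap J f C = cls J (f (rep C))"

definition qadd :: "('k::monoid_add \<Rightarrow>\<^sub>0 complex) set \<Rightarrow> ('k \<Rightarrow>\<^sub>0 complex) set \<Rightarrow> ('k \<Rightarrow>\<^sub>0 complex) set \<Rightarrow> ('k \<Rightarrow>\<^sub>0 complex) set" where
  "qadd J C D = cls J (rep C + rep D)"

definition qmul :: "('k::monoid_add \<Rightarrow>\<^sub>0 complex) set \<Rightarrow> ('k \<Rightarrow>\<^sub>0 complex) set \<Rightarrow> ('k \<Rightarrow>\<^sub>0 complex) set \<Rightarrow> ('k \<Rightarrow>\<^sub>0 complex) set" where
  "qmul J C D = cls J (rep C * rep D)"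

definition qscale :: "('k \<Rightarrow>\<^sub>0 complex) set \<Rightarrow> complex \<Rightarrow> ('k \<Rightarrow>\<^sub>0 complex) set \<Rightarrow> ('k \<Rightarrow>\<^sub>0 complex) set" where
  "qscale J c C = cls J (sc c (rep C))"

definition qone :: "('k::monoid_add \<Rightarrow>\<^sub>0 complex) set \<Rightarrow> ('k \<Rightarrow>\<^sub>0 complex) set" where
  "qone J = cls J 1"

definition qstar_hom :: "('k::monoid_add \<Rightarrow>\<^sub>0 complex) set \<Rightarrow> (('k \<Rightarrow>\<^sub>0 complex) \<Rightarrow> ('k \<Rightarrow>\<^sub>0 complex))
   \<Rightarrow> ('k \<Rightarrow>\<^sub>0 complex) set set \<Rightarrow> (('k \<Rightarrow>\<^sub>0 complex) set \<Rightarrow> ('k \<Rightarrow>\<^sub>0 complex) set) \<Rightarrow> bool" where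
  "qstar_hom J st X f \<longleftrightarrow>
     (\<forall>C\<in>X. \<forall>D\<in>X. f (qadd J C D) = qadd J (f C) (f D) \<and> f (qmul J C D) = qmul J (f C) (f D)) \<and>
     (\<forall>C\<in>X. \<forall>c. f (qscale J c C) = qscale J c (f C)) \<and>
     (\<forall>C\<in>X. f (qmap J st C) = qmap J st (f C)) \<and>
     f (qone J) = qone J"

definition SU :: "real \<Rightarrow> real \<Rightarrow> real \<Rightarrow> tensalg set set" where
  "SU p q \<theta> = quot (tideal p q \<theta>)"

definition fixalg :: "real \<Rightarrow> real \<Rightarrow> real \<Rightarrow> nat \<Rightarrow> tensalg set set" where
  "fixalg p q \<theta> N = {C \<in> SU p q \<theta>.
     \<forall>k<N. qmap (tideal p q \<theta>) (alphaT (cis (2 * pi * real k / real N))) C = C}"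

definition phi :: "real \<Rightarrow> real \<Rightarrow> real \<Rightarrow> nat \<Rightarrow> tensalg set \<Rightarrow> tensalg set" where
  "phi p q \<theta> N = qmap (tideal p q \<theta>) (phiT N)"

text \<open>phi^-1: apply (id (x) psi^-1) to the class of x_(0) (x) S(x_(1)) h\<close>
definition phi_inv :: "real \<Rightarrow> real \<Rightarrow> real \<Rightarrow> nat \<Rightarrow> tensalg set \<Rightarrow> tensalg set" where
  "phi_inv p q \<theta> N C = cls (tideal p q \<theta>)
     (SOME z. cls (tideal p q \<theta>) (psiT N z) = qmap (tideal p q \<theta>) preT C)"

end

theory Submission
  imports Defs "HOL-Library.Real_Mod"
begin


lemma lookup_sc[simp]: "Poly_Mapping.lookup (sc c x) k = c * Poly_Mapping.lookup x k"
  by (simp add: sc_def Poly_Mapping.map.rep_eq when_def)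

lemma sc_eq_iff: "sc c x = Poly_Mapping.map (\<lambda>v. c*v) x" by (simp add: sc_def)

lemma sc_zero[simp]: "sc c 0 = 0" "sc 0 x = 0"
  by (auto intro!: poly_mapping_eqI)
lemma sc_one[simp]: "sc 1 x = x"
  by (auto intro!: poly_mapping_eqI)
lemma sc_add: "sc c (x + y) = sc c x + sc c y"
  by (auto intro!: poly_mapping_eqI simp: lookup_add algebra_simps)
lemma sc_add2: "sc (c + d) x = sc c x + sc d x"
  by (auto intro!: poly_mapping_eqI simp: lookup_add algebra_simps)
lemma sc_diff: "sc c (x - y) = sc c x - sc c y"
  by (rule poly_mapping_eqI) (simp only: lookup_sc lookup_minus right_diff_distrib)
lemma sc_sc: "sc c (sc d x) = sc (c*d) x"
  by (auto intro!: poly_mapping_eqI simp: algebra_simps)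
lemma sc_single[simp]: "sc c (Poly_Mapping.single k a) = Poly_Mapping.single k (c*a)"
  by (auto intro!: poly_mapping_eqI simp: lookup_single when_def)
lemma sc_sum: "sc c (sum f A) = (\<Sum>a\<in>A. sc c (f a))"
  by (auto intro!: poly_mapping_eqI simp: lookup_sum sum_distrib_left)
lemma expand: "x = (\<Sum>k\<in>Poly_Mapping.keys x. Poly_Mapping.single k (Poly_Mapping.lookup x k))"
  by (auto intro!: poly_mapping_eqI simp: lookup_sum lookup_single when_def in_keys_iff)

lemma sc_mult_left: "sc c (x * (y::'k::monoid_add \<Rightarrow>\<^sub>0 complex)) = sc c x * y"
  by (simp add: sc_def mult_map_scale_conv_mult mult.assoc)
lemma sc_mult_right: "sc c (x * (y::'k::monoid_add \<Rightarrow>\<^sub>0 complex)) = x * sc c y"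
proof -
  have 1: "y * Poly_Mapping.single 0 c = sc c y" for y :: "'k \<Rightarrow>\<^sub>0 complex"
  proof -
    have "y * Poly_Mapping.single 0 c = (\<Sum>k\<in>Poly_Mapping.keys y. Poly_Mapping.single k (Poly_Mapping.lookup y k)) * Poly_Mapping.single 0 c"
      by (simp only: expand[of y, symmetric])
    also have "\<dots> = sc c (\<Sum>k\<in>Poly_Mapping.keys y. Poly_Mapping.single k (Poly_Mapping.lookup y k))"
      by (simp add: sum_distrib_right mult_single sc_sum mult.commute)
    also have "\<dots> = sc c y" by (simp only: expand[of y, symmetric])
    finally show ?thesis .
  qed
  have "sc c (x * y) = x * y * Poly_Mapping.single 0 c" by (simp add: 1)
  also have "\<dots> = x * (y * Poly_Mapping.single 0 c)" by (rule mult.assoc)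
  also have "\<dots> = x * sc c y" by (subst 1) (rule refl)
  finally show ?thesis .
qed

lemma lin_superset:
  assumes "finite A" "Poly_Mapping.keys y \<subseteq> A"
  shows "lin f y = (\<Sum>k\<in>A. sc (Poly_Mapping.lookup y k) (f k))"
  unfolding lin_def
  by (rule sum.mono_neutral_left) (use assms in \<open>auto simp: in_keys_iff\<close>)

lemma antilin_superset:
  assumes "finite A" "Poly_Mapping.keys y \<subseteq> A"
  shows "antilin f y = (\<Sum>k\<in>A. sc (cnj (Poly_Mapping.lookup y k)) (f k))"
  unfolding antilin_def
  by (rule sum.mono_neutral_left) (use assms in \<open>auto simp: in_keys_iff\<close>)

lemma lin_add: "lin f (x + y) = lin f x + lin f y"
proof -
  let ?A = "Poly_Mapping.keys x \<union> Poly_Mapping.keys y"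
  have "lin f (x+y) = (\<Sum>k\<in>?A. sc (Poly_Mapping.lookup (x+y) k) (f k))"
    by (rule lin_superset) (auto simp: in_keys_iff lookup_add)
  also have "\<dots> = (\<Sum>k\<in>?A. sc (Poly_Mapping.lookup x k) (f k)) + (\<Sum>k\<in>?A. sc (Poly_Mapping.lookup y k) (f k))"
    by (simp add: lookup_add sc_add2 sum.distrib)
  also have "\<dots> = lin f x + lin f y"
    by (subst (1 2) lin_superset[of ?A]) auto
  finally show ?thesis .
qed

lemma antilin_add: "antilin f (x + y) = antilin f x + antilin f y"
proof -
  let ?A = "Poly_Mapping.keys x \<union> Poly_Mapping.keys y"
  have "antilin f (x+y) = (\<Sum>k\<in>?A. sc (cnj (Poly_Mapping.lookup (x+y) k)) (f k))"
    by (rule antilin_superset) (auto simp: in_keys_iff lookup_add)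
  also have "\<dots> = (\<Sum>k\<in>?A. sc (cnj (Poly_Mapping.lookup x k)) (f k)) + (\<Sum>k\<in>?A. sc (cnj (Poly_Mapping.lookup y k)) (f k))"
    by (simp add: lookup_add sc_add2 sum.distrib)
  also have "\<dots> = antilin f x + antilin f y"
    by (subst (1 2) antilin_superset[of ?A]) auto
  finally show ?thesis .
qed

lemma lin_zero[simp]: "lin f 0 = 0" by (simp add: lin_def)
lemma antilin_zero[simp]: "antilin f 0 = 0" by (simp add: antilin_def)

lemma lin_sc: "lin f (sc c x) = sc c (lin f x)"
proof -
  have "lin f (sc c x) = (\<Sum>k\<in>Poly_Mapping.keys x. sc (Poly_Mapping.lookup (sc c x) k) (f k))"
    by (rule lin_superset) (auto simp: in_keys_iff)
  then show ?thesis by (simp add: lin_def sc_sum sc_sc)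
qed

lemma antilin_sc: "antilin f (sc c x) = sc (cnj c) (antilin f x)"
proof -
  have "antilin f (sc c x) = (\<Sum>k\<in>Poly_Mapping.keys x. sc (cnj (Poly_Mapping.lookup (sc c x) k)) (f k))"
    by (rule antilin_superset) (auto simp: in_keys_iff)
  then show ?thesis by (simp add: antilin_def sc_sum sc_sc)
qed

lemma lin_uminus: "lin f (- x) = - lin f x"
  using lin_add[of f "-x" x] by (simp add: eq_neg_iff_add_eq_0)
lemma lin_diff: "lin f (x - y) = lin f x - lin f y"
  by (metis diff_conv_add_uminus lin_add lin_uminus)
lemma antilin_uminus: "antilin f (- x) = - antilin f x"
  using antilin_add[of f "-x" x] by (simp add: eq_neg_iff_add_eq_0)
lemma antilin_diff: "antilin f (x - y) = antilin f x - antilin f y"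
  by (metis diff_conv_add_uminus antilin_add antilin_uminus)

lemma lin_sum: "lin f (sum g A) = (\<Sum>a\<in>A. lin f (g a))"
  by (induction A rule: infinite_finite_induct) (auto simp: lin_add)
lemma antilin_sum: "antilin f (sum g A) = (\<Sum>a\<in>A. antilin f (g a))"
  by (induction A rule: infinite_finite_induct) (auto simp: antilin_add)

lemma lin_single[simp]: "lin f (Poly_Mapping.single k c) = sc c (f k)"
  by (simp add: lin_def)
lemma antilin_single[simp]: "antilin f (Poly_Mapping.single k c) = sc (cnj c) (f k)"
  by (simp add: antilin_def)

lemma lin_cong: "(\<And>k. k \<in> Poly_Mapping.keys x \<Longrightarrow> f k = g k) \<Longrightarrow> lin f x = lin g x"
  by (simp add: lin_def)

lemma lookup_lin: "Poly_Mapping.lookup (lin f y) l = (\<Sum>k\<in>Poly_Mapping.keys y. Poly_Mapping.lookup y k * Poly_Mapping.lookup (f k) l)"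
  by (simp add: lin_def lookup_sum)

lemma lin_expand: "lin f y = (\<Sum>k\<in>Poly_Mapping.keys y. sc (Poly_Mapping.lookup y k) (f k))"
  by (simp add: lin_def)


abbreviation lk where "lk \<equiv> Poly_Mapping.lookup"
abbreviation sg where "sg \<equiv> Poly_Mapping.single"
abbreviation ks where "ks \<equiv> Poly_Mapping.keys"

lemma kmap_single[simp]: "kmap g (sg k c) = sg (g k) c"
  by (simp add: kmap_def)
lemma kmap_add: "kmap g (x + y) = kmap g x + kmap g y" by (simp add: kmap_def lin_add)
lemma kmap_diff: "kmap g (x - y) = kmap g x - kmap g y" by (simp add: kmap_def lin_diff)
lemma kmap_sc: "kmap g (sc c x) = sc c (kmap g x)" by (simp add: kmap_def lin_sc)
lemma kmap_sum: "kmap g (sum f A) = (\<Sum>a\<in>A. kmap g (f a))" by (simp add: kmap_def lin_sum)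
lemma kmap_zero[simp]: "kmap g 0 = 0" by (simp add: kmap_def)
lemma kmap_cong: "(\<And>k. k \<in> ks x \<Longrightarrow> f k = g k) \<Longrightarrow> kmap f x = kmap g x"
  unfolding kmap_def by (rule lin_cong) simp

lemma kmap_expand: "kmap g x = (\<Sum>k\<in>ks x. sg (g k) (lk x k))"
  by (simp add: kmap_def lin_expand)

lemma kmap_comp: "kmap g (kmap f x) = kmap (g \<circ> f) x"
  by (simp add: kmap_expand[of f] kmap_sum kmap_expand[of "g \<circ> f"])

lemma lookup_kmap: "lk (kmap g x) l = (\<Sum>k\<in>{k\<in>ks x. g k = l}. lk x k)"
  by (simp add: kmap_expand lookup_sum lookup_single when_def sum.inter_filter[symmetric] if_distrib cong: if_cong)

lemma lookup_kmap_inj: "inj g \<Longrightarrow> lk (kmap g x) (g k) = lk x k"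
proof -
  assume "inj g"
  then have "{k'\<in>ks x. g k' = g k} = (if k \<in> ks x then {k} else {})"
    by (auto dest: injD)
  then show ?thesis by (simp add: lookup_kmap in_keys_iff)
qed

lemma lookup_kmap_notin: "(\<And>k. g k \<noteq> l) \<Longrightarrow> lk (kmap g x) l = 0"
  by (simp add: lookup_kmap)

lemma mult_expand: "x * (y :: 'k::monoid_add \<Rightarrow>\<^sub>0 complex) = (\<Sum>k\<in>ks x. \<Sum>l\<in>ks y. sg (k + l) (lk x k * lk y l))"
proof -
  have "x * y = (\<Sum>k\<in>ks x. sg k (lk x k)) * (\<Sum>l\<in>ks y. sg l (lk y l))"
    by (simp only: expand[symmetric])
  also have "\<dots> = (\<Sum>k\<in>ks x. \<Sum>l\<in>ks y. sg (k + l) (lk x k * lk y l))"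
    by (simp add: sum_product mult_single)
  finally show ?thesis .
qed

lemma kmap_mult:
  fixes g :: "'k::monoid_add \<Rightarrow> 'l::monoid_add"
  assumes "\<And>a b. g (a + b) = g a + g b"
  shows "kmap g (x * y) = kmap g x * kmap g y"
proof -
  have "kmap g (x * y) = (\<Sum>k\<in>ks x. \<Sum>l\<in>ks y. sg (g k + g l) (lk x k * lk y l))"
    by (simp add: mult_expand kmap_sum assms)
  also have "\<dots> = (\<Sum>k\<in>ks x. sg (g k) (lk x k)) * (\<Sum>l\<in>ks y. sg (g l) (lk y l))"
    by (simp add: sum_product mult_single)
  also have "\<dots> = kmap g x * kmap g y" by (simp add: kmap_expand)
  finally show ?thesis .
qed

lemma lookup_lin_diag: "lk (lin (\<lambda>k. sg k (c k)) x) l = c l * lk x l"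
proof -
  have "lk (lin (\<lambda>k. sg k (c k)) x) l = (\<Sum>k\<in>ks x. lk x k * (if k = l then c k else 0))"
    by (simp add: lookup_lin lookup_single when_def eq_commute)
  also have "\<dots> = c l * lk x l"
    by (cases "l \<in> ks x") (auto simp: if_distrib in_keys_iff cong: if_cong)
  finally show ?thesis .
qed


lemma gen_star_inv[simp]: "gen_star (gen_star g) = g" by (cases g) auto
lemma word_star_inv[simp]: "word_star (word_star w) = w"
  by (cases w) (simp add: rev_map comp_def)
lemma gen_deg_star[simp]: "gen_deg (gen_star g) = - gen_deg g" by (cases g) auto
lemma deg_star_aux: "sum_list (map gen_deg (rev (map gen_star xs))) = - sum_list (map gen_deg xs)"
  by (induction xs) auto
lemma deg_star[simp]: "deg (word_star w) = - deg w"
  by (cases w) (simp add: deg_star_aux)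
lemma deg_plus[simp]: "deg (v + w) = deg v + deg w"
  by (cases v; cases w) simp
lemma deg_zero[simp]: "deg 0 = 0" by (simp add: zero_word_def)

lemma tens_single[simp]: "tens (sg w a) (sg m b) = sg (w, m) (a * b)"
  by (simp add: tens_def mult_single)

lemma rho_single[simp]: "rho (sg w c) = sg (w, deg w) c"
  by (simp add: rho_def)

lemma psi_single[simp]: "psi N (sg m c) = sg (int N * m) c" by (simp add: psi_def)
lemma antipode_single[simp]: "antipode (sg m c) = sg (- m) c" by (simp add: antipode_def)

lemma phiT_kmap: "phiT N = kmap (\<lambda>(w, m). (w, deg w + int N * m))"
  unfolding phiT_def kmap_def
  by (intro ext arg_cong2[where f=lin] refl) (auto simp: idT_def mult_single)

lemma preT_kmap: "preT = kmap (\<lambda>(w, m). (w, m - deg w))"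
  unfolding preT_def kmap_def
  by (intro ext arg_cong2[where f=lin] refl) (auto simp: idT_def mult_single)

lemma psiT_kmap: "psiT N = kmap (\<lambda>(w, m). (w, int N * m))"
  unfolding psiT_def idT_def kmap_def
  by (intro ext arg_cong2[where f=lin] refl) auto

lemma evU_single: "evU (sg n 1) l = l powi n" by (simp add: evU_def)

lemma alphaT_diag: "alphaT z = lin (\<lambda>(w, m). sg (w, m) (z powi deg w * inverse z powi m))"
  unfolding alphaT_def
  by (intro ext arg_cong2[where f=lin] refl)
     (auto simp: alphaF_def rotU_def evU_single)

lemma lookup_alphaT: "lk (alphaT z x) (w, m) = z powi deg w * inverse z powi m * lk x (w, m)"
proof -
  have "alphaT z = lin (\<lambda>k. sg k ((\<lambda>(w,m). z powi deg w * inverse z powi m) k))"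
    by (simp add: alphaT_diag case_prod_unfold)
  then show ?thesis by (simp add: lookup_lin_diag)
qed

lemma sum_delta_keys: fixes f :: "complex \<Rightarrow> complex" shows "(\<Sum>k\<in>ks x. f (lk x k) * (if k = a then 1 else 0)) = f (lk x a) * (if a \<in> ks x then 1 else 0)"
proof -
  have "(\<Sum>k\<in>ks x. f (lk x k) * (if k = a then 1 else 0)) = (\<Sum>k\<in>ks x. if k = a then f (lk x k) else 0)"
    by (rule sum.cong) auto
  also have "\<dots> = f (lk x a) * (if a \<in> ks x then 1 else 0)" by (simp add: sum.delta')
  finally show ?thesis .
qed

lemma lookup_antilin_inv:
  assumes "\<And>k. s (s k) = k"
  shows "lk (antilin (\<lambda>k. sg (s k) 1) x) l = cnj (lk x (s l))"
proof -
  have e: "(s k = l) = (k = s l)" for k by (metis assms)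
  have "lk (antilin (\<lambda>k. sg (s k) 1) x) l = (\<Sum>k\<in>ks x. cnj (lk x k) * (if k = s l then 1 else 0))"
    unfolding antilin_def lookup_sum by (rule sum.cong) (auto simp: lookup_single when_def e)
  also have "\<dots> = cnj (lk x (s l))"
    using sum_delta_keys[of cnj x "s l"] by (auto simp: in_keys_iff)
  finally show ?thesis .
qed

lemma lookup_tstar: "lk (tstar x) (w, m) = cnj (lk x (word_star w, - m))"
proof -
  have e: "tstar = antilin (\<lambda>k. sg ((\<lambda>(w,m). (word_star w, - m)) k) 1)"
    by (simp add: tstar_def case_prod_unfold)
  show ?thesis unfolding e
    using lookup_antilin_inv[where s="\<lambda>(w,m). (word_star w, - m)" and x=x and l="(w,m)"] by auto
qed

lemma lookup_fstar: "lk (fstar x) w = cnj (lk x (word_star w))"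
  unfolding fstar_def by (rule lookup_antilin_inv) simp

lemma lookup_slice: "lk (slice m y) w = lk y (w, m)"
proof -
  have "lk (slice m y) w = (\<Sum>k\<in>ks y. lk y k * (if k = (w, m) then 1 else 0))"
    unfolding slice_def lookup_lin by (rule sum.cong) (auto simp: lookup_single when_def split: if_splits)
  also have "\<dots> = lk y (w, m)"
    using sum_delta_keys[of "\<lambda>x. x" y "(w,m)"] by (auto simp: in_keys_iff)
  finally show ?thesis .
qed

lemma tstar_add: "tstar (x + y) = tstar x + tstar y" by (simp add: tstar_def antilin_add)
lemma tstar_diff: "tstar (x - y) = tstar x - tstar y" by (simp add: tstar_def antilin_diff)
lemma fstar_add: "fstar (x + y) = fstar x + fstar y" by (simp add: fstar_def antilin_add)
lemma fstar_diff: "fstar (x - y) = fstar x - fstar y" by (simp add: fstar_def antilin_diff)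


definition proj :: "int \<Rightarrow> freealg \<Rightarrow> freealg" where
  "proj d = lin (\<lambda>w. sg w (if deg w = d then 1 else 0))"

lemma lookup_proj: "lk (proj d x) w = (if deg w = d then lk x w else 0)"
  by (simp add: proj_def lookup_lin_diag)

definition hom :: "int \<Rightarrow> freealg \<Rightarrow> bool" where
  "hom e x \<longleftrightarrow> (\<forall>w\<in>ks x. deg w = e)"

lemma hom_single: "hom (deg w) (sg w c)" by (simp add: hom_def)
lemma hom_zero[simp]: "hom e 0" by (simp add: hom_def)
lemma hom_one: "hom 0 1" by (simp add: hom_def)
lemma hom_sc: "hom e x \<Longrightarrow> hom e (sc c x)" by (auto simp: hom_def in_keys_iff)
lemma hom_add: "hom e x \<Longrightarrow> hom e y \<Longrightarrow> hom e (x + y)"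
  by (auto simp: hom_def in_keys_iff lookup_add)
lemma hom_diff: "hom e x \<Longrightarrow> hom e y \<Longrightarrow> hom e (x - y)"
  by (auto simp: hom_def in_keys_iff lookup_minus)
lemma hom_mult: "hom e x \<Longrightarrow> hom e' y \<Longrightarrow> hom (e + e') (x * y)"
  unfolding hom_def using keys_mult[of x y] by fastforce
lemma hom_sum: "(\<And>a. a \<in> A \<Longrightarrow> hom e (f a)) \<Longrightarrow> hom e (sum f A)"
  by (induction A rule: infinite_finite_induct) (auto intro: hom_add)

lemma proj_hom: "hom e x \<Longrightarrow> proj d x = (if d = e then x else 0)"
  by (rule poly_mapping_eqI) (auto simp: lookup_proj hom_def in_keys_iff)

lemma proj_single[simp]: "proj d (sg w c) = (if deg w = d then sg w c else 0)"
  by (simp add: proj_def)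

lemma hom_proj: "hom d (proj d x)"
  by (auto simp: hom_def in_keys_iff lookup_proj split: if_splits)

lemma proj_add: "proj d (x + y) = proj d x + proj d y" by (simp add: proj_def lin_add)
lemma proj_sum: "proj d (sum f A) = (\<Sum>a\<in>A. proj d (f a))" by (simp add: proj_def lin_sum)
lemma proj_zero[simp]: "proj d 0 = 0" by (simp add: proj_def)

lemma decomp: "x = (\<Sum>e\<in>deg ` ks x. proj e x)"
proof (rule poly_mapping_eqI)
  fix w
  have "lk (\<Sum>e\<in>deg ` ks x. proj e x) w = (\<Sum>e\<in>deg ` ks x. if e = deg w then lk x w else 0)"
    by (simp add: lookup_sum lookup_proj eq_commute)
  also have "\<dots> = lk x w"
    by (auto simp: sum.delta' in_keys_iff)
  finally show "lk x w = lk (\<Sum>e\<in>deg ` ks x. proj e x) w" by simp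
qed

lemma proj_mult_left: "hom e a \<Longrightarrow> proj d (a * x) = a * proj (d - e) x"
proof -
  assume h: "hom e a"
  have "proj d (a * x) = proj d (a * (\<Sum>l\<in>ks x. sg l (lk x l)))" by (simp only: expand[symmetric])
  also have "\<dots> = (\<Sum>l\<in>ks x. proj d (a * sg l (lk x l)))" by (simp add: sum_distrib_left proj_sum)
  also have "\<dots> = (\<Sum>l\<in>ks x. a * proj (d - e) (sg l (lk x l)))"
  proof (rule sum.cong[OF refl])
    fix l
    have "hom (e + deg l) (a * sg l (lk x l))" by (rule hom_mult[OF h hom_single])
    then show "proj d (a * sg l (lk x l)) = a * proj (d - e) (sg l (lk x l))"
      by (auto simp: proj_hom)
  qed
  also have "\<dots> = a * proj (d - e) (\<Sum>l\<in>ks x. sg l (lk x l))" by (simp add: sum_distrib_left proj_sum)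
  finally show ?thesis by (simp only: expand[symmetric])
qed

lemma proj_mult_right: "hom e a \<Longrightarrow> proj d (x * a) = proj (d - e) x * a"
proof -
  assume h: "hom e a"
  have "proj d (x * a) = proj d ((\<Sum>l\<in>ks x. sg l (lk x l)) * a)" by (simp only: expand[symmetric])
  also have "\<dots> = (\<Sum>l\<in>ks x. proj d (sg l (lk x l) * a))" by (simp add: sum_distrib_right proj_sum)
  also have "\<dots> = (\<Sum>l\<in>ks x. proj (d - e) (sg l (lk x l)) * a)"
  proof (rule sum.cong[OF refl])
    fix l
    have "hom (deg l + e) (sg l (lk x l) * a)" by (rule hom_mult[OF hom_single h])
    then show "proj d (sg l (lk x l) * a) = proj (d - e) (sg l (lk x l)) * a"
      by (auto simp: proj_hom)
  qed
  also have "\<dots> = proj (d - e) (\<Sum>l\<in>ks x. sg l (lk x l)) * a" by (simp add: sum_distrib_right proj_sum)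
  finally show ?thesis by (simp only: expand[symmetric])
qed

lemma proj_fstar: "proj d (fstar x) = fstar (proj (- d) x)"
  by (rule poly_mapping_eqI) (auto simp: lookup_proj lookup_fstar)

context fixes p q \<theta> :: real begin

abbreviation "I \<equiv> rel_ideal p q \<theta>"

lemma I_sc: "x \<in> I \<Longrightarrow> sc c x \<in> I"
  by (simp add: sc_def mult_map_scale_conv_mult rel_ideal.lmult)
lemma I_uminus: "x \<in> I \<Longrightarrow> - x \<in> I"
proof -
  have "sc (-1) x = - x" by (rule poly_mapping_eqI) simp
  then show "x \<in> I \<Longrightarrow> - x \<in> I" using I_sc[of x "-1"] by simp
qed
lemma I_diff: "x \<in> I \<Longrightarrow> y \<in> I \<Longrightarrow> x - y \<in> I"
  using I_uminus rel_ideal.add[where x=x and y="-y"] by simp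
lemma I_sum: "(\<And>a. a \<in> A \<Longrightarrow> f a \<in> I) \<Longrightarrow> sum f A \<in> I"
  by (induction A rule: infinite_finite_induct) (auto intro: rel_ideal.add rel_ideal.zero)

lemma hom_single': "deg w = e \<Longrightarrow> hom e (sg w c)" by (simp add: hom_def)

lemma rels_hom: "r \<in> rels p q \<theta> \<Longrightarrow> \<exists>e. hom e r"
proof -
  have s: "sg (W xs) 1 * sg (W ys) 1 = sg (W (xs @ ys)) (1::complex)" for xs ys
    by (simp add: mult_single)
  assume "r \<in> rels p q \<theta>"
  then show ?thesis
    unfolding rels_def Let_def ga_def gas_def gb_def gbs_def
    apply (simp add: s)
    apply (elim disjE)
    apply (rule exI[of _ 2], simp, rule hom_diff; rule hom_single'; simp)
    apply (rule exI[of _ 0], simp, rule hom_diff; rule hom_single'; simp)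
    apply (rule exI[of _ 0], simp, rule hom_diff, rule hom_diff, rule hom_single', simp, rule hom_single', simp, rule hom_sc, rule hom_one)
    apply (rule exI[of _ 0], simp, rule hom_diff, rule hom_diff, rule hom_single', simp, rule hom_single', simp, rule hom_sc, rule hom_one)
    apply (rule exI[of _ "0 + 0"], simp only:, rule hom_mult, rule hom_diff, rule hom_one, rule hom_single', simp, rule hom_diff, rule hom_one, rule hom_single', simp)
    done
qed

lemma I_proj: "x \<in> I \<Longrightarrow> proj d x \<in> I"
proof (induction x arbitrary: d rule: rel_ideal.induct)
  case (gen r)
  then obtain e where "hom e r" using rels_hom by blast
  then show ?case using gen by (simp add: proj_hom rel_ideal.gen rel_ideal.zero)
next
  case zero then show ?case by (simp add: rel_ideal.zero)
next
  case (add x y) then show ?case by (simp add: proj_add rel_ideal.add)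
next
  case (lmult x z)
  have "proj d (z * x) = proj d ((\<Sum>e\<in>deg ` ks z. proj e z) * x)" by (simp only: decomp[symmetric])
  also have "\<dots> = (\<Sum>e\<in>deg ` ks z. proj e z * proj (d - e) x)"
    by (simp add: sum_distrib_right proj_sum proj_mult_right[OF hom_proj] proj_mult_left[OF hom_proj])
  finally show ?case using lmult by (auto intro!: I_sum rel_ideal.lmult)
next
  case (rmult x z)
  have "proj d (x * z) = proj d (x * (\<Sum>e\<in>deg ` ks z. proj e z))" by (simp only: decomp[symmetric])
  also have "\<dots> = (\<Sum>e\<in>deg ` ks z. proj (d - e) x * proj e z)"
    by (simp add: sum_distrib_left proj_sum proj_mult_right[OF hom_proj])
  finally show ?case using rmult by (auto intro!: I_sum rel_ideal.rmult)
next
  case (star x)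
  then show ?case by (simp add: proj_fstar rel_ideal.star)
qed

end


lemma slice_single[simp]: "slice m (sg (w, n) c) = (if n = m then sg w c else 0)"
  by (simp add: slice_def)
lemma slice_add: "slice m (x + y) = slice m x + slice m y" by (simp add: slice_def lin_add)
lemma slice_diff: "slice m (x - y) = slice m x - slice m y" by (simp add: slice_def lin_diff)
lemma slice_sc: "slice m (sc c x) = sc c (slice m x)" by (simp add: slice_def lin_sc)
lemma slice_sum: "slice m (sum f A) = (\<Sum>a\<in>A. slice m (f a))" by (simp add: slice_def lin_sum)
lemma slice_zero[simp]: "slice m 0 = 0" by (simp add: slice_def)

lemma slice_term_r: "slice m (sg (k + (w,n)) (a * c)) = slice (m - n) (sg k a) * sg w c"
  by (cases k) (auto simp: mult_single mult.commute)
lemma slice_term_l: "slice m (sg ((w,n) + k) (c * a)) = sg w c * slice (m - n) (sg k a)"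
  by (cases k) (auto simp: mult_single mult.commute)

lemma slice_mult_single_right: "slice m (y * sg (w, n) c) = slice (m - n) y * sg w c"
proof -
  have "slice m (y * sg (w, n) c) = slice m ((\<Sum>k\<in>ks y. sg k (lk y k)) * sg (w, n) c)"
    by (simp only: expand[symmetric])
  also have "\<dots> = (\<Sum>k\<in>ks y. slice (m - n) (sg k (lk y k)) * sg w c)"
    by (simp add: sum_distrib_right slice_sum mult_single slice_term_r del: slice_single)
  also have "\<dots> = slice (m - n) (\<Sum>k\<in>ks y. sg k (lk y k)) * sg w c"
    by (simp add: sum_distrib_right slice_sum)
  finally show ?thesis by (simp only: expand[symmetric])
qed

lemma slice_mult_single_left: "slice m (sg (w, n) c * y) = sg w c * slice (m - n) y"
proof -
  have "slice m (sg (w, n) c * y) = slice m (sg (w, n) c * (\<Sum>k\<in>ks y. sg k (lk y k)))"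
    by (simp only: expand[symmetric])
  also have "\<dots> = (\<Sum>k\<in>ks y. sg w c * slice (m - n) (sg k (lk y k)))"
    by (simp add: sum_distrib_left slice_sum mult_single slice_term_l del: slice_single)
  also have "\<dots> = sg w c * slice (m - n) (\<Sum>k\<in>ks y. sg k (lk y k))"
    by (simp add: sum_distrib_left slice_sum)
  finally show ?thesis by (simp only: expand[symmetric])
qed

lemma slice_tstar: "slice m (tstar y) = fstar (slice (- m) y)"
  by (rule poly_mapping_eqI) (simp add: lookup_slice lookup_tstar lookup_fstar)

context fixes p q \<theta> :: real begin

abbreviation "J \<equiv> tideal p q \<theta>"

lemma J_zero: "0 \<in> J" by (simp add: tideal_def rel_ideal.zero)
lemma J_add: "x \<in> J \<Longrightarrow> y \<in> J \<Longrightarrow> x + y \<in> J"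
  by (simp add: tideal_def slice_add rel_ideal.add)
lemma J_diff: "x \<in> J \<Longrightarrow> y \<in> J \<Longrightarrow> x - y \<in> J"
  by (simp add: tideal_def slice_diff I_diff)
lemma J_sc: "x \<in> J \<Longrightarrow> sc c x \<in> J"
  by (simp add: tideal_def slice_sc I_sc)
lemma J_sum: "(\<And>a. a \<in> A \<Longrightarrow> f a \<in> J) \<Longrightarrow> sum f A \<in> J"
  by (simp add: tideal_def slice_sum I_sum)
lemma J_tstar: "x \<in> J \<Longrightarrow> tstar x \<in> J"
  by (simp add: tideal_def slice_tstar rel_ideal.star)

lemma J_mult_right: "y \<in> J \<Longrightarrow> y * x \<in> J"
proof -
  assume y: "y \<in> J"
  have "y * x = (\<Sum>k\<in>ks x. y * sg k (lk x k))"
    by (simp only: sum_distrib_left[symmetric] expand[symmetric])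
  moreover have "y * sg k (lk x k) \<in> J" for k
    using y by (cases k) (simp add: tideal_def slice_mult_single_right rel_ideal.rmult)
  ultimately show ?thesis by (auto intro: J_sum)
qed

lemma J_mult_left: "y \<in> J \<Longrightarrow> x * y \<in> J"
proof -
  assume y: "y \<in> J"
  have "x * y = (\<Sum>k\<in>ks x. sg k (lk x k) * y)"
    by (simp only: sum_distrib_right[symmetric] expand[symmetric])
  moreover have "sg k (lk x k) * y \<in> J" for k
    using y by (cases k) (simp add: tideal_def slice_mult_single_left rel_ideal.lmult)
  ultimately show ?thesis by (auto intro: J_sum)
qed

lemma J_gen:
  assumes t: "t \<in> J"
    and L: "\<And>w k. lk y (w, k) = (case s (deg w) k of None \<Rightarrow> 0 | Some m \<Rightarrow> c (deg w) k * lk t (w, m))"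
  shows "y \<in> J"
  unfolding tideal_def
proof (intro CollectI allI)
  fix k
  define D where "D = deg ` fst ` ks t"
  have fD: "finite D" by (simp add: D_def)
  have eq: "slice k y = (\<Sum>d\<in>D. case s d k of None \<Rightarrow> 0 | Some m \<Rightarrow> sc (c d k) (proj d (slice m t)))"
  proof (rule poly_mapping_eqI)
    fix w
    define F where "F d = (case s d k of None \<Rightarrow> 0 | Some m \<Rightarrow> c d k * lk t (w, m))" for d
    have "lk (\<Sum>d\<in>D. case s d k of None \<Rightarrow> 0 | Some m \<Rightarrow> sc (c d k) (proj d (slice m t))) w
        = (\<Sum>d\<in>D. if d = deg w then F d else 0)"
      unfolding lookup_sum
      by (rule sum.cong[OF refl]) (auto simp: F_def lookup_proj lookup_slice split: option.split)
    also have "\<dots> = (if deg w \<in> D then F (deg w) else 0)"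
      using fD by (simp add: sum.delta')
    also have "\<dots> = F (deg w)"
    proof -
      have "F (deg w) = 0" if nd: "deg w \<notin> D"
      proof -
        have "lk t (w, m) = 0" for m
        proof (rule ccontr)
          assume "lk t (w, m) \<noteq> 0"
          then have "(w, m) \<in> ks t" by (simp add: in_keys_iff)
          then have "deg w \<in> D" unfolding D_def by (metis fst_conv image_eqI)
          with nd show False by simp
        qed
        then show ?thesis by (simp add: F_def split: option.split)
      qed
      then show ?thesis by auto
    qed
    also have "\<dots> = lk (slice k y) w" by (simp add: lookup_slice L F_def)
    finally show "lk (slice k y) w = lk (\<Sum>d\<in>D. case s d k of None \<Rightarrow> 0 | Some m \<Rightarrow> sc (c d k) (proj d (slice m t))) w" by simp
  qed
  have "(case s d k of None \<Rightarrow> 0 | Some m \<Rightarrow> sc (c d k) (proj d (slice m t))) \<in> I p q \<theta>" for d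
    using t by (auto simp: tideal_def rel_ideal.zero I_sc I_proj split: option.split)
  then show "slice k y \<in> I p q \<theta>" unfolding eq by (rule I_sum)
qed

end


definition gk :: "(int \<Rightarrow> int \<Rightarrow> int) \<Rightarrow> word \<times> int \<Rightarrow> word \<times> int" where
  "gk h = (\<lambda>(w, m). (w, h (deg w) m))"

lemma gk_inj: "(\<And>d. inj (h d)) \<Longrightarrow> inj (gk h)"
  by (auto simp: gk_def inj_def)

lemma lookup_gk: "(\<And>d. inj (h d)) \<Longrightarrow> lk (kmap (gk h) t) (w, h (deg w) m) = lk t (w, m)"
  using lookup_kmap_inj[where g="gk h" and x=t and k="(w,m)"] gk_inj[of h] by (simp add: gk_def)

lemma lookup_gk_notin: "(\<And>m. h (deg w) m \<noteq> k) \<Longrightarrow> lk (kmap (gk h) t) (w, k) = 0"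
  by (rule lookup_kmap_notin) (auto simp: gk_def)

context fixes p q \<theta> :: real begin

lemma kmap_J:
  assumes inj: "\<And>d. inj (h d)" and t: "t \<in> J p q \<theta>"
  shows "kmap (gk h) t \<in> J p q \<theta>"
proof (rule J_gen[OF t, where s = "\<lambda>d k. if \<exists>m. h d m = k then Some (THE m. h d m = k) else None"
      and c = "\<lambda>_ _. 1"])
  fix w k
  show "lk (kmap (gk h) t) (w, k) = (case (if \<exists>m. h (deg w) m = k then Some (THE m. h (deg w) m = k) else None) of None \<Rightarrow> 0 | Some m \<Rightarrow> 1 * lk t (w, m))"
  proof (cases "\<exists>m. h (deg w) m = k")
    case True
    then obtain m where m: "h (deg w) m = k" by blast
    have "(THE m. h (deg w) m = k) = m" using m inj by (auto dest: injD)
    then show ?thesis using True m lookup_gk[where h=h and t=t and w=w and m=m, OF inj] by simp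
  next
    case False
    then show ?thesis by (simp add: lookup_gk_notin)
  qed
qed

lemma reflect_J:
  assumes y: "y \<in> J p q \<theta>" and L: "\<And>w m. lk x (w, m) = lk y (w, h (deg w) m)"
  shows "x \<in> J p q \<theta>"
  by (rule J_gen[OF y, where s = "\<lambda>d k. Some (h d k)" and c = "\<lambda>_ _. 1"]) (simp add: L)

lemma alpha_J: "t \<in> J p q \<theta> \<Longrightarrow> alphaT z t \<in> J p q \<theta>"
  by (rule J_gen[where s = "\<lambda>d k. Some k" and c = "\<lambda>d k. z powi d * inverse z powi k"])
     (auto simp: lookup_alphaT)

end

lemma phiT_gk: "phiT N = kmap (gk (\<lambda>d m. d + int N * m))"
  by (simp add: phiT_kmap gk_def)
lemma preT_gk: "preT = kmap (gk (\<lambda>d m. m - d))"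
  by (simp add: preT_kmap gk_def)
lemma psiT_gk: "psiT N = kmap (gk (\<lambda>d m. int N * m))"
  by (simp add: psiT_kmap gk_def)

lemma inj_phi_h: "N > 0 \<Longrightarrow> inj (\<lambda>m. d + int N * m)" by (auto simp: inj_def)
lemma inj_pre_h: "inj (\<lambda>m::int. m - d)" by (auto simp: inj_def)
lemma inj_psi_h: "N > 0 \<Longrightarrow> inj (\<lambda>m. int N * m)" by (auto simp: inj_def)

lemma preT_phiT: "preT (phiT N x) = psiT N x"
  by (simp add: preT_kmap phiT_kmap psiT_kmap kmap_comp comp_def case_prod_unfold)

lemma alphaT_add: "alphaT z (x + y) = alphaT z x + alphaT z y" by (simp add: alphaT_def lin_add)
lemma alphaT_diff: "alphaT z (x - y) = alphaT z x - alphaT z y" by (simp add: alphaT_def lin_diff)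
lemma phiT_diff: "phiT N (x - y) = phiT N x - phiT N y" by (simp add: phiT_kmap kmap_diff)
lemma preT_diff: "preT (x - y) = preT x - preT y" by (simp add: preT_kmap kmap_diff)
lemma psiT_diff: "psiT N (x - y) = psiT N x - psiT N y" by (simp add: psiT_kmap kmap_diff)


definition zeta :: "nat \<Rightarrow> nat \<Rightarrow> complex" where
  "zeta N k = cis (2 * pi * real k / real N)"

lemma coef: "zeta N k powi d * inverse (zeta N k) powi m = (cis (2 * pi * of_int (d - m) / real N)) ^ k"
proof -
  have "zeta N k powi d * inverse (zeta N k) powi m
      = cis (of_int d * (2 * pi * real k / real N) + of_int m * (- (2 * pi * real k / real N)))"
    by (simp add: zeta_def cis_power_int cis_mult)
  also have "\<dots> = cis (real k * (2 * pi * of_int (d - m) / real N))"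
    by (rule arg_cong[where f=cis]) (cases "N = 0", simp_all add: field_simps)
  also have "\<dots> = (cis (2 * pi * of_int (d - m) / real N)) ^ k"
    by (simp add: DeMoivre)
  finally show ?thesis .
qed

lemma omega_one: "N > 0 \<Longrightarrow> cis (2 * pi * of_int j / real N) = 1 \<longleftrightarrow> int N dvd j"
proof
  assume N: "N > 0" and c: "cis (2 * pi * of_int j / real N) = 1"
  then obtain n where n: "2 * pi * of_int j / real N = of_int n * (2 * pi)"
    by (auto simp: cis_eq_1_iff)
  then have "of_int j = real N * of_int n" using N by (simp add: field_simps)
  then have "j = int N * n" by (metis of_int_eq_iff of_int_mult of_int_of_nat_eq)
  then show "int N dvd j" by simp
next
  assume N: "N > 0" and "int N dvd j"
  then obtain n where "j = int N * n" by auto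
  then have "2 * pi * of_int j / real N = 2 * pi * of_int n" using N by simp
  then show "cis (2 * pi * of_int j / real N) = 1" by simp
qed

lemma root_sum:
  assumes N: "N > 0"
  shows "(\<Sum>k<N. (cis (2 * pi * of_int j / real N)) ^ k) = (if int N dvd j then of_nat N else 0)"
proof (cases "int N dvd j")
  case True
  then show ?thesis using omega_one[OF N, of j] by simp
next
  case False
  let ?w = "cis (2 * pi * of_int j / real N)"
  have ne: "?w \<noteq> 1" using omega_one[OF N, of j] False by simp
  have "?w ^ N = cis (2 * pi * of_int j)" using N by (simp add: DeMoivre)
  also have "\<dots> = 1" by simp
  finally have wN: "?w ^ N = 1" .
  have "(\<Sum>k<N. ?w ^ k) = (?w ^ N - 1) / (?w - 1)" using ne by (rule geometric_sum)
  then show ?thesis using wN False by simp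
qed

lemma lookup_phiT_cases:
  assumes N: "N > 0"
  shows "lk (phiT N a) (w, m) \<noteq> 0 \<Longrightarrow> int N dvd (m - deg w)"
proof (rule ccontr)
  assume "\<not> int N dvd (m - deg w)"
  then have "\<And>n. deg w + int N * n \<noteq> m" by auto
  then have "lk (phiT N a) (w, m) = 0" unfolding phiT_gk by (rule lookup_gk_notin)
  moreover assume "lk (phiT N a) (w, m) \<noteq> 0"
  ultimately show False by simp
qed

lemma alpha_phi_fixed:
  assumes N: "N > 0"
  shows "alphaT (zeta N k) (phiT N a) = phiT N a"
proof (rule poly_mapping_eqI)
  fix x :: "word \<times> int"
  obtain w m where x: "x = (w, m)" by (cases x)
  show "lk (alphaT (zeta N k) (phiT N a)) x = lk (phiT N a) x"
  proof (cases "lk (phiT N a) (w, m) = 0")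
    case True then show ?thesis by (simp add: x lookup_alphaT)
  next
    case False
    then obtain n where n: "m - deg w = int N * n" using lookup_phiT_cases[OF N] by blast
    then have "deg w - m = int N * (- n)" by simp
    then have "int N dvd (deg w - m)" by simp
    then have "cis (2 * pi * of_int (deg w - m) / real N) = 1" using omega_one[OF N] by blast
    then show ?thesis by (simp add: x lookup_alphaT coef)
  qed
qed

definition avg :: "nat \<Rightarrow> tensalg \<Rightarrow> tensalg" where
  "avg N y = sc (1 / of_nat N) (\<Sum>k<N. alphaT (zeta N k) y)"

lemma lookup_avg:
  assumes N: "N > 0"
  shows "lk (avg N y) (w, m) = (if int N dvd (deg w - m) then lk y (w, m) else 0)"
proof -
  have "lk (avg N y) (w, m) = (1 / of_nat N) * ((\<Sum>k<N. (cis (2 * pi * of_int (deg w - m) / real N)) ^ k) * lk y (w, m))"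
    by (simp add: avg_def lookup_sum lookup_alphaT coef sum_distrib_right)
  also have "\<dots> = (if int N dvd (deg w - m) then lk y (w, m) else 0)"
    using N root_sum[OF N, of "deg w - m"] by auto
  finally show ?thesis .
qed

lemma avg_diff:
  assumes N: "N > 0"
  shows "avg N y - y = sc (1 / of_nat N) (\<Sum>k<N. alphaT (zeta N k) y - y)"
  by (rule poly_mapping_eqI) (use N in \<open>simp add: avg_def lookup_sum lookup_minus, simp add: sum_subtractf field_simps\<close>)


lemma one_sg: "(1 :: tensalg) = sg (0, 0) 1"
  by (rule poly_mapping_eqI) (simp add: lookup_one lookup_single zero_prod_def when_def eq_commute)

lemma phiT_one: "phiT N 1 = 1"
  by (simp add: one_sg phiT_kmap zero_word_def)

lemma phiT_mult: "phiT N (x * y) = phiT N x * phiT N y"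
  unfolding phiT_kmap by (rule kmap_mult) (auto simp: case_prod_unfold algebra_simps)

lemma phiT_sc: "phiT N (sc c x) = sc c (phiT N x)" by (simp add: phiT_kmap kmap_sc)

lemma tstar_single: "tstar (sg (w, m) c) = sg (word_star w, - m) (cnj c)"
  by (simp add: tstar_def)
lemma tstar_sum: "tstar (sum f A) = (\<Sum>a\<in>A. tstar (f a))" by (simp add: tstar_def antilin_sum)
lemma tstar_sc: "tstar (sc c x) = sc (cnj c) (tstar x)" by (simp add: tstar_def antilin_sc)

lemma phiT_tstar: "phiT N (tstar x) = tstar (phiT N x)"
proof -
  have t: "phiT N (tstar (sg k c)) = tstar (phiT N (sg k c))" for k c
    by (cases k) (simp add: tstar_single phiT_kmap, rule arg_cong2[where f=sg], simp_all)
  have "phiT N (tstar (\<Sum>k\<in>ks x. sg k (lk x k))) = tstar (phiT N (\<Sum>k\<in>ks x. sg k (lk x k)))"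
    by (simp add: tstar_sum phiT_kmap kmap_sum t[unfolded phiT_kmap])
  then show ?thesis by (simp only: expand[symmetric])
qed

lemma cls_mem: "0 \<in> K \<Longrightarrow> a \<in> cls K a" by (simp add: cls_def)

context fixes p q \<theta> :: real and N :: nat assumes N: "0 < N" begin

abbreviation JJ where "JJ \<equiv> tideal p q \<theta>"
abbreviation sim (infix "\<approx>" 50) where "x \<approx> y \<equiv> x - y \<in> JJ"

lemma sim_refl: "x \<approx> x" using J_zero by simp
lemma sim_sym: "x \<approx> y \<Longrightarrow> y \<approx> x"
  using J_diff[where x=0 and y="x - y", OF J_zero] by simp
lemma sim_trans: "x \<approx> y \<Longrightarrow> y \<approx> z \<Longrightarrow> x \<approx> z"
  using J_add[where x="x - y" and y="y - z"] by simp
lemma sim_add: "x \<approx> x' \<Longrightarrow> y \<approx> y' \<Longrightarrow> x + y \<approx> x' + y'"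
  using J_add[where x="x - x'" and y="y - y'"] by (simp add: algebra_simps)
lemma sim_mult: "x \<approx> x' \<Longrightarrow> y \<approx> y' \<Longrightarrow> x * y \<approx> x' * y'"
proof -
  assume a: "x \<approx> x'" "y \<approx> y'"
  have "x * y - x' * y' = (x - x') * y + x' * (y - y')" by (simp add: algebra_simps)
  then show ?thesis using a J_add J_mult_right J_mult_left by metis
qed
lemma sim_sc: "x \<approx> y \<Longrightarrow> sc c x \<approx> sc c y"
  using J_sc by (simp add: sc_diff[symmetric])
lemma sim_tstar: "x \<approx> y \<Longrightarrow> tstar x \<approx> tstar y"
  using J_tstar by (simp add: tstar_diff[symmetric])
lemma sim_phiT: "x \<approx> y \<Longrightarrow> phiT N x \<approx> phiT N y"
  using kmap_J[where p=p and q=q and \<theta>=\<theta> and t="x - y", OF inj_phi_h[OF N]] by (simp add: phiT_gk kmap_diff)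
lemma sim_preT: "x \<approx> y \<Longrightarrow> preT x \<approx> preT y"
  using kmap_J[where p=p and q=q and \<theta>=\<theta> and t="x - y", OF inj_pre_h] by (simp add: preT_gk kmap_diff)
lemma sim_psiT: "x \<approx> y \<Longrightarrow> psiT N x \<approx> psiT N y"
  using kmap_J[where p=p and q=q and \<theta>=\<theta> and t="x - y", OF inj_psi_h[OF N]] by (simp add: psiT_gk kmap_diff)
lemma sim_alpha: "x \<approx> y \<Longrightarrow> alphaT z x \<approx> alphaT z y"
  using alpha_J[where p=p and q=q and \<theta>=\<theta> and t="x - y"] by (simp add: alphaT_diff)

lemma preT_refl: "preT x \<approx> preT y \<Longrightarrow> x \<approx> y"
proof -
  assume a: "preT x \<approx> preT y"
  show ?thesis
  proof (rule reflect_J[where h = "\<lambda>d m. m - d"])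
    show "preT (x - y) \<in> JJ" using a by (simp add: preT_diff)
    fix w m
    show "lk (x - y) (w, m) = lk (preT (x - y)) (w, m - deg w)"
      unfolding preT_gk using lookup_gk[where h="\<lambda>d m. m - d" and t="x - y" and w=w and m=m, OF inj_pre_h] by simp
  qed
qed
lemma psiT_refl: "psiT N x \<approx> psiT N y \<Longrightarrow> x \<approx> y"
proof -
  assume a: "psiT N x \<approx> psiT N y"
  show ?thesis
  proof (rule reflect_J[where h = "\<lambda>d m. int N * m"])
    show "psiT N (x - y) \<in> JJ" using a by (simp add: psiT_diff)
    fix w m
    show "lk (x - y) (w, m) = lk (psiT N (x - y)) (w, int N * m)"
      unfolding psiT_gk using lookup_gk[where h="\<lambda>d m. int N * m" and t="x - y" and w=w and m=m, OF inj_psi_h[OF N]] by simp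
  qed
qed

lemma cls_eq: "cls JJ a = cls JJ b \<longleftrightarrow> a \<approx> b"
proof
  assume "cls JJ a = cls JJ b"
  then have "a \<in> cls JJ b" using cls_mem[OF J_zero] by metis
  then show "a \<approx> b" by (simp add: cls_def)
next
  assume ab: "a \<approx> b"
  show "cls JJ a = cls JJ b"
    unfolding cls_def using ab sim_trans sim_sym by blast
qed

lemma rep_sim: "rep (cls JJ a) \<approx> a"
proof -
  have "rep (cls JJ a) \<in> cls JJ a" unfolding rep_def by (rule someI[of _ a]) (rule cls_mem[OF J_zero])
  then show ?thesis by (simp add: cls_def)
qed

lemma SU_rep: "C \<in> SU p q \<theta> \<Longrightarrow> cls JJ (rep C) = C"
  unfolding SU_def quot_def using rep_sim cls_eq by auto

lemma cls_SU[simp]: "cls JJ a \<in> SU p q \<theta>" by (simp add: SU_def quot_def)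

lemma phi_fix: "cls JJ (phiT N a) \<in> fixalg p q \<theta> N"
  unfolding fixalg_def
proof (intro CollectI conjI allI impI cls_SU)
  fix k assume "k < N"
  have "alphaT (zeta N k) (rep (cls JJ (phiT N a))) \<approx> alphaT (zeta N k) (phiT N a)"
    by (rule sim_alpha[OF rep_sim])
  then have "alphaT (zeta N k) (rep (cls JJ (phiT N a))) \<approx> phiT N a"
    by (simp add: alpha_phi_fixed[OF N])
  then show "qmap JJ (alphaT (cis (2 * pi * real k / real N))) (cls JJ (phiT N a)) = cls JJ (phiT N a)"
    by (simp add: qmap_def cls_eq zeta_def)
qed

lemma phi_in: "C \<in> SU p q \<theta> \<Longrightarrow> phi p q \<theta> N C \<in> fixalg p q \<theta> N"
  by (simp add: phi_def qmap_def phi_fix)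

lemma exists_z:
  assumes C: "C \<in> fixalg p q \<theta> N"
  shows "\<exists>z. cls JJ (psiT N z) = qmap JJ preT C"
proof -
  define y where "y = rep C"
  have CS: "C \<in> SU p q \<theta>" using C by (simp add: fixalg_def)
  have Cy: "cls JJ y = C" using SU_rep[OF CS] by (simp add: y_def)
  have fx: "alphaT (zeta N k) y \<approx> y" if "k < N" for k
  proof -
    have "qmap JJ (alphaT (zeta N k)) C = C" using C that by (simp add: fixalg_def zeta_def)
    then have "cls JJ (alphaT (zeta N k) y) = cls JJ y" using Cy by (simp add: qmap_def y_def)
    then show ?thesis by (simp add: cls_eq)
  qed
  define y' where "y' = avg N y"
  have y'y: "y' \<approx> y" unfolding y'_def avg_diff[OF N]
    by (rule J_sc, rule J_sum) (use fx in auto)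
  define z where "z = kmap (\<lambda>(w, m). (w, (m - deg w) div int N)) y'"
  have "psiT N z = kmap (\<lambda>(w, m). (w, int N * ((m - deg w) div int N))) y'"
    by (simp add: z_def psiT_kmap kmap_comp comp_def case_prod_unfold)
  also have "\<dots> = kmap (\<lambda>(w, m). (w, m - deg w)) y'"
  proof (rule kmap_cong)
    fix k assume k: "k \<in> ks y'"
    obtain w m where km: "k = (w, m)" by (cases k)
    have "lk y' (w, m) \<noteq> 0" using k km by (simp add: in_keys_iff)
    then have "int N dvd (deg w - m)" by (simp add: y'_def lookup_avg[OF N] split: if_splits)
    then have "int N dvd (m - deg w)" by (metis dvd_diff_commute)
    then show "(case k of (w, m) \<Rightarrow> (w, int N * ((m - deg w) div int N))) = (case k of (w, m) \<Rightarrow> (w, m - deg w))"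
      by (simp add: km)
  qed
  also have "\<dots> = preT y'" by (simp add: preT_kmap)
  finally have "psiT N z \<approx> preT y" using sim_preT[OF y'y] by simp
  then show ?thesis by (auto simp: qmap_def y_def cls_eq)
qed


lemma phiT_add: "phiT N (x + y) = phiT N x + phiT N y" by (simp add: phiT_kmap kmap_add)

definition z0 where "z0 C = (SOME z. cls JJ (psiT N z) = qmap JJ preT C)"

lemma z0_spec:
  assumes C: "C \<in> fixalg p q \<theta> N"
  shows "psiT N (z0 C) \<approx> preT (rep C)"
proof -
  have "cls JJ (psiT N (z0 C)) = qmap JJ preT C"
    unfolding z0_def using exists_z[OF C] by (rule someI_ex)
  then show ?thesis by (simp add: qmap_def cls_eq)
qed

lemma phi_inv_z0: "phi_inv p q \<theta> N C = cls JJ (z0 C)"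
  by (simp add: phi_inv_def z0_def)

lemma phi_eq: "phi p q \<theta> N C = cls JJ (phiT N (rep C))" by (simp add: phi_def qmap_def)

lemma phi_phi_inv:
  assumes C: "C \<in> fixalg p q \<theta> N"
  shows "phi p q \<theta> N (phi_inv p q \<theta> N C) = C"
proof -
  have CS: "C \<in> SU p q \<theta>" using C by (simp add: fixalg_def)
  have "preT (phiT N (z0 C)) \<approx> preT (rep C)" using z0_spec[OF C] by (simp add: preT_phiT)
  then have a: "phiT N (z0 C) \<approx> rep C" by (rule preT_refl)
  have "phiT N (rep (cls JJ (z0 C))) \<approx> phiT N (z0 C)" by (rule sim_phiT[OF rep_sim])
  then have "phiT N (rep (cls JJ (z0 C))) \<approx> rep C" using a sim_trans by blast
  then have "cls JJ (phiT N (rep (cls JJ (z0 C)))) = cls JJ (rep C)" by (simp add: cls_eq)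
  then show ?thesis using SU_rep[OF CS] by (simp add: phi_eq phi_inv_z0)
qed

lemma phi_inv_phi:
  assumes C: "C \<in> SU p q \<theta>"
  shows "phi_inv p q \<theta> N (phi p q \<theta> N C) = C"
proof -
  let ?D = "phi p q \<theta> N C"
  have D: "?D \<in> fixalg p q \<theta> N" by (rule phi_in[OF C])
  have "preT (rep ?D) \<approx> preT (phiT N (rep C))"
    by (rule sim_preT) (simp add: phi_eq rep_sim)
  then have "psiT N (z0 ?D) \<approx> psiT N (rep C)"
    using z0_spec[OF D] sim_trans by (simp add: preT_phiT)
  then have "z0 ?D \<approx> rep C" by (rule psiT_refl)
  then have "cls JJ (z0 ?D) = cls JJ (rep C)" by (simp add: cls_eq)
  then show ?thesis using SU_rep[OF C] by (simp add: phi_inv_z0)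
qed

lemma phi_inv_SU: "phi_inv p q \<theta> N C \<in> SU p q \<theta>" by (simp add: phi_inv_z0)

lemma phi_bij: "bij_betw (phi p q \<theta> N) (SU p q \<theta>) (fixalg p q \<theta> N)"
  by (rule bij_betw_byWitness[where f'="phi_inv p q \<theta> N"])
     (auto simp: phi_inv_phi phi_phi_inv phi_in phi_inv_SU)

lemma phi_hom_all: "qstar_hom JJ tstar X (phi p q \<theta> N)"
  unfolding qstar_hom_def
proof (intro conjI ballI allI)
  fix C D :: "tensalg set"
  let ?a = "rep C" and ?b = "rep D"
  have ra: "rep (cls JJ (phiT N ?a)) \<approx> phiT N ?a" and rb: "rep (cls JJ (phiT N ?b)) \<approx> phiT N ?b"
    by (rule rep_sim)+
  show "phi p q \<theta> N (qadd JJ C D) = qadd JJ (phi p q \<theta> N C) (phi p q \<theta> N D)"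
  proof -
    have "phiT N (rep (cls JJ (?a + ?b))) \<approx> phiT N (?a + ?b)" by (rule sim_phiT[OF rep_sim])
    moreover have "phiT N (?a + ?b) \<approx> rep (cls JJ (phiT N ?a)) + rep (cls JJ (phiT N ?b))"
      unfolding phiT_add by (rule sim_add; rule sim_sym; rule rep_sim)
    ultimately show ?thesis by (simp add: phi_eq qadd_def cls_eq sim_trans)
  qed
  show "phi p q \<theta> N (qmul JJ C D) = qmul JJ (phi p q \<theta> N C) (phi p q \<theta> N D)"
  proof -
    have "phiT N (rep (cls JJ (?a * ?b))) \<approx> phiT N (?a * ?b)" by (rule sim_phiT[OF rep_sim])
    moreover have "phiT N (?a * ?b) \<approx> rep (cls JJ (phiT N ?a)) * rep (cls JJ (phiT N ?b))"
      unfolding phiT_mult by (rule sim_mult; rule sim_sym; rule rep_sim)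
    ultimately show ?thesis by (simp add: phi_eq qmul_def cls_eq sim_trans)
  qed
next
  fix C :: "tensalg set" and c
  let ?a = "rep C"
  show "phi p q \<theta> N (qscale JJ c C) = qscale JJ c (phi p q \<theta> N C)"
  proof -
    have "phiT N (rep (cls JJ (sc c ?a))) \<approx> phiT N (sc c ?a)" by (rule sim_phiT[OF rep_sim])
    moreover have "phiT N (sc c ?a) \<approx> sc c (rep (cls JJ (phiT N ?a)))"
      unfolding phiT_sc by (rule sim_sc; rule sim_sym; rule rep_sim)
    ultimately show ?thesis by (simp add: phi_eq qscale_def cls_eq sim_trans)
  qed
next
  fix C :: "tensalg set"
  let ?a = "rep C"
  show "phi p q \<theta> N (qmap JJ tstar C) = qmap JJ tstar (phi p q \<theta> N C)"
  proof -
    have "phiT N (rep (cls JJ (tstar ?a))) \<approx> phiT N (tstar ?a)" by (rule sim_phiT[OF rep_sim])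
    moreover have "phiT N (tstar ?a) \<approx> tstar (rep (cls JJ (phiT N ?a)))"
      unfolding phiT_tstar by (rule sim_tstar; rule sim_sym; rule rep_sim)
    ultimately show ?thesis by (simp add: phi_eq qmap_def cls_eq sim_trans)
  qed
next
  have "phiT N (rep (cls JJ 1)) \<approx> phiT N 1" by (rule sim_phiT[OF rep_sim])
  then show "phi p q \<theta> N (qone JJ) = qone JJ"
    by (simp add: phi_eq qone_def cls_eq phiT_one)
qed

lemma phi_inv_hom: "qstar_hom JJ tstar (fixalg p q \<theta> N) (phi_inv p q \<theta> N)"
proof -
  have iv: "phi_inv p q \<theta> N (phi p q \<theta> N (cls JJ a)) = cls JJ a" for a
    by (rule phi_inv_phi) simp
  have bk: "C = phi p q \<theta> N (phi_inv p q \<theta> N C)" if "C \<in> fixalg p q \<theta> N" for C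
    using phi_phi_inv[OF that] by simp
  have H: "qstar_hom JJ tstar (SU p q \<theta>) (phi p q \<theta> N)" by (rule phi_hom_all)
  have SUX: "phi_inv p q \<theta> N C \<in> SU p q \<theta>" for C by (rule phi_inv_SU)
  show ?thesis
    unfolding qstar_hom_def
  proof (intro conjI ballI allI)
    fix C D assume C: "C \<in> fixalg p q \<theta> N" and D: "D \<in> fixalg p q \<theta> N"
    let ?X = "phi_inv p q \<theta> N C" and ?Y = "phi_inv p q \<theta> N D"
    have "qadd JJ C D = phi p q \<theta> N (qadd JJ ?X ?Y)"
      using H SUX bk[OF C] bk[OF D] unfolding qstar_hom_def by metis
    then show "phi_inv p q \<theta> N (qadd JJ C D) = qadd JJ ?X ?Y"
      by (simp add: qadd_def iv)
    have "qmul JJ C D = phi p q \<theta> N (qmul JJ ?X ?Y)"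
      using H SUX bk[OF C] bk[OF D] unfolding qstar_hom_def by metis
    then show "phi_inv p q \<theta> N (qmul JJ C D) = qmul JJ ?X ?Y"
      by (simp add: qmul_def iv)
  next
    fix C c assume C: "C \<in> fixalg p q \<theta> N"
    let ?X = "phi_inv p q \<theta> N C"
    have "qscale JJ c C = phi p q \<theta> N (qscale JJ c ?X)"
      using H SUX bk[OF C] unfolding qstar_hom_def by metis
    then show "phi_inv p q \<theta> N (qscale JJ c C) = qscale JJ c ?X"
      by (simp add: qscale_def iv)
  next
    fix C assume C: "C \<in> fixalg p q \<theta> N"
    let ?X = "phi_inv p q \<theta> N C"
    have "qmap JJ tstar C = phi p q \<theta> N (qmap JJ tstar ?X)"
      using H SUX bk[OF C] unfolding qstar_hom_def by metis
    then show "phi_inv p q \<theta> N (qmap JJ tstar C) = qmap JJ tstar ?X"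
      by (simp add: qmap_def iv)
  next
    have "qone JJ = phi p q \<theta> N (qone JJ)"
      using H unfolding qstar_hom_def by metis
    then show "phi_inv p q \<theta> N (qone JJ) = qone JJ"
      unfolding qone_def using iv[of 1] by metis
  qed
qed

end


theorem mainTheorem11:
  fixes p q \<theta> :: real and N :: nat
  assumes "0 \<le> p" "p < 1" "0 \<le> q" "q < 1" "0 < \<theta>" "\<theta> < 1" "\<theta> \<notin> \<rat>" "0 < N"
  shows
    \<comment> \<open>phi and the formula for phi^-1 are well defined on the quotient\<close>
    "(\<forall>x y. x - y \<in> tideal p q \<theta> \<longrightarrow> phiT N x - phiT N y \<in> tideal p q \<theta>) \<and>
     (\<forall>x y. x - y \<in> tideal p q \<theta> \<longrightarrow> preT x - preT y \<in> tideal p q \<theta>) \<and>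
     (\<forall>C\<in>fixalg p q \<theta> N. \<exists>z. cls (tideal p q \<theta>) (psiT N z) = qmap (tideal p q \<theta>) preT C) \<and>
     (\<forall>z z'. cls (tideal p q \<theta>) (psiT N z) = cls (tideal p q \<theta>) (psiT N z')
        \<longrightarrow> cls (tideal p q \<theta>) z = cls (tideal p q \<theta>) z') \<and>
     \<comment> \<open>mutually inverse bijections\<close>
     bij_betw (phi p q \<theta> N) (SU p q \<theta>) (fixalg p q \<theta> N) \<and>
     (\<forall>C\<in>fixalg p q \<theta> N. phi_inv p q \<theta> N C \<in> SU p q \<theta> \<and> phi p q \<theta> N (phi_inv p q \<theta> N C) = C) \<and>
     (\<forall>C\<in>SU p q \<theta>. phi_inv p q \<theta> N (phi p q \<theta> N C) = C) \<and>
     \<comment> \<open>*-algebra homomorphisms\<close>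
     qstar_hom (tideal p q \<theta>) tstar (SU p q \<theta>) (phi p q \<theta> N) \<and>
     qstar_hom (tideal p q \<theta>) tstar (fixalg p q \<theta> N) (phi_inv p q \<theta> N)"
proof -
  have N: "0 < N" using assms by simp
  have c4: "cls (tideal p q \<theta>) z = cls (tideal p q \<theta>) z'"
    if "cls (tideal p q \<theta>) (psiT N z) = cls (tideal p q \<theta>) (psiT N z')" for z z'
    using that cls_eq[OF N] psiT_refl[OF N] by metis
  show ?thesis
  proof (intro conjI allI impI ballI)
    show "phiT N x - phiT N y \<in> tideal p q \<theta>" if "x - y \<in> tideal p q \<theta>" for x y
      using sim_phiT[OF N that] .
    show "preT x - preT y \<in> tideal p q \<theta>" if "x - y \<in> tideal p q \<theta>" for x y
      using sim_preT[OF N that] .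
    show "\<exists>z. cls (tideal p q \<theta>) (psiT N z) = qmap (tideal p q \<theta>) preT C" if "C \<in> fixalg p q \<theta> N" for C
      using exists_z[OF N that] .
    show "cls (tideal p q \<theta>) z = cls (tideal p q \<theta>) z'"
      if "cls (tideal p q \<theta>) (psiT N z) = cls (tideal p q \<theta>) (psiT N z')" for z z'
      using c4[OF that] .
    show "bij_betw (phi p q \<theta> N) (SU p q \<theta>) (fixalg p q \<theta> N)" using phi_bij[OF N] .
    show "phi_inv p q \<theta> N C \<in> SU p q \<theta>" for C using phi_inv_SU[OF N] .
    show "phi p q \<theta> N (phi_inv p q \<theta> N C) = C" if "C \<in> fixalg p q \<theta> N" for C
      using phi_phi_inv[OF N that] .
    show "phi_inv p q \<theta> N (phi p q \<theta> N C) = C" if "C \<in> SU p q \<theta>" for C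
      using phi_inv_phi[OF N that] .
    show "qstar_hom (tideal p q \<theta>) tstar (SU p q \<theta>) (phi p q \<theta> N)" using phi_hom_all[OF N] .
    show "qstar_hom (tideal p q \<theta>) tstar (fixalg p q \<theta> N) (phi_inv p q \<theta> N)" using phi_inv_hom[OF N] .
  qed
qed

end
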